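(* Let $(M,d)$ be a pointed metric space. The space $\mathrm{Lip}_0(M)$ has the $w^*$-LD2P if and only if for every finite cyclically monotonic subset $A\subseteq\widetilde M$ and every $\gamma\in(0,1)$ there exist $u,v\in M$ with $u\ne v$ such that $A\cup\{(u,v)\}$ and $A\cup\{(v,u)\}$ are both $\gamma$-cyclically monotonic.
   Context: $M$ has base point $0$; $\mathrm{Lip}_0(M)$ is the real Banach space of Lipschitz $f\colon M\to\mathbb R$ with $f(0)=0$, normed by the best Lipschitz constant. It is the dual of the Lipschitz-free space $\mathcal F(M)$ (norm-closed span of the point evaluations $\delta_x$ in $\mathrm{Lip}_0(M)^*$). $\mathrm{Lip}_0(M)$ has the $w^*$-LD2P if every $w^*$-slice $\{f\in B_{\mathrm{Lip}_0(M)}: \mu(f)>1-\alpha\}$, with $\mu\in\mathcal F(M)$, $\|\mu\|=1$, $\alpha>0$, has diameter $2$. $\widetilde M=\{(x,y)\in M\times M:x\ne y\}$. For $\gamma\in(0,1]$, $A\subseteq\widetilde M$ is $\gamma$-cyclically monotonic if for every finite sequence $(x_1,y_1),\dots,(x_n,y_n)\in A$, with $y_{n+1}=y_1$, $\sum_{i=1}^n\min\{d(x_i,y_{i+1})-\gamma d(x_i,y_i),\,d(y_i,y_{i+1})\}\ge0$; $A$ is cyclically monotonic if for every such sequence $\sum_i d(x_i,y_{i+1})\ge\sum_i d(x_i,y_i)$. *)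

theory Defs
  imports "HOL-Analysis.Analysis"
begin

text \<open>The pointed metric space M is the whole type 'a (a metric space), base point x0.\<close>

definition Lip0 :: "'a::metric_space \<Rightarrow> ('a \<Rightarrow> real) set" where
  "Lip0 x0 = {f. f x0 = 0 \<and> (\<exists>C. C-lipschitz_on UNIV f)}"

definition lipnorm :: "('a::metric_space \<Rightarrow> real) \<Rightarrow> real" where
  "lipnorm f = Sup {\<bar>f x - f y\<bar> / dist x y | x y. x \<noteq> y}"

definition LipBall :: "'a::metric_space \<Rightarrow> ('a \<Rightarrow> real) set" where
  "LipBall x0 = {f \<in> Lip0 x0. lipnorm f \<le> 1}"

definition molecule :: "'a set \<Rightarrow> ('a \<Rightarrow> real) \<Rightarrow> ('a \<Rightarrow> real) \<Rightarrow> real" where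
  "molecule S a f = (\<Sum>x\<in>S. a x * f x)"

definition dual_norm :: "'a::metric_space \<Rightarrow> (('a \<Rightarrow> real) \<Rightarrow> real) \<Rightarrow> real" where
  "dual_norm x0 \<mu> = Sup ((\<lambda>f. \<bar>\<mu> f\<bar>) ` LipBall x0)"

text \<open>Elements of the Lipschitz-free space F(M): norm limits (in Lip0(M)^*) of
  linear combinations of point evaluations. A functional is identified with its
  restriction to the unit ball, which determines it.\<close>
definition in_free_space :: "'a::metric_space \<Rightarrow> (('a \<Rightarrow> real) \<Rightarrow> real) \<Rightarrow> bool" where
  "in_free_space x0 \<mu> \<longleftrightarrow>
     (\<forall>\<epsilon>>0. \<exists>S a. finite S \<and> (\<forall>f\<in>LipBall x0. \<bar>\<mu> f - molecule S a f\<bar> \<le> \<epsilon>))"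

definition lip_diam :: "('a::metric_space \<Rightarrow> real) set \<Rightarrow> real" where
  "lip_diam F = Sup {lipnorm (f - g) | f g. f \<in> F \<and> g \<in> F}"

definition wstar_slice :: "'a::metric_space \<Rightarrow> (('a \<Rightarrow> real) \<Rightarrow> real) \<Rightarrow> real \<Rightarrow> ('a \<Rightarrow> real) set" where
  "wstar_slice x0 \<mu> \<alpha> = {f \<in> LipBall x0. \<mu> f > 1 - \<alpha>}"

definition wstar_LD2P :: "'a::metric_space \<Rightarrow> bool" where
  "wstar_LD2P x0 \<longleftrightarrow>
     (\<forall>\<mu> \<alpha>. in_free_space x0 \<mu> \<and> dual_norm x0 \<mu> = 1 \<and> \<alpha> > 0
        \<longrightarrow> lip_diam (wstar_slice x0 \<mu> \<alpha>) = 2)"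

definition tildeM :: "('a \<times> 'a) set" where
  "tildeM = {(x, y). x \<noteq> y}"

text \<open>Finite sequences (x_1,y_1),...,(x_n,y_n) are p 0, ..., p (n-1); y_{n+1} = y_1.\<close>
definition gamma_cyc_mono :: "real \<Rightarrow> ('a::metric_space \<times> 'a) set \<Rightarrow> bool" where
  "gamma_cyc_mono \<gamma> A \<longleftrightarrow> A \<subseteq> tildeM \<and>
     (\<forall>n p. (\<forall>i<n. p i \<in> A) \<longrightarrow>
        0 \<le> (\<Sum>i<n. min (dist (fst (p i)) (snd (p (Suc i mod n))) - \<gamma> * dist (fst (p i)) (snd (p i)))
                          (dist (snd (p i)) (snd (p (Suc i mod n))))))"

definition cyc_mono :: "('a::metric_space \<times> 'a) set \<Rightarrow> bool" where
  "cyc_mono A \<longleftrightarrow> A \<subseteq> tildeM \<and>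
     (\<forall>n p. (\<forall>i<n. p i \<in> A) \<longrightarrow>
        (\<Sum>i<n. dist (fst (p i)) (snd (p i))) \<le> (\<Sum>i<n. dist (fst (p i)) (snd (p (Suc i mod n)))))"

end

theory Submission
  imports Defs
begin



lemma potential:
  fixes B :: "('a::metric_space \<times> 'a) set" and \<gamma> :: real and r :: 'a
  assumes cyc: "\<forall>n p. (\<forall>i<n. p i \<in> B) \<longrightarrow> 0 \<le> (\<Sum>i<n. dist (fst (p i)) (snd (p (Suc i mod n))) - \<gamma> * dist (fst (p i)) (snd (p i)))"
  shows "\<exists>f. (\<forall>a b. \<bar>f a - f b\<bar> \<le> dist a b) \<and> (\<forall>q\<in>B. f (fst q) - f (snd q) \<ge> \<gamma> * dist (fst q) (snd q))"
proof -
  define ch where "ch = (\<lambda>z n (p::nat \<Rightarrow> 'a \<times> 'a). if n = 0 then dist z r else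
     dist z (snd (p 0)) + (\<Sum>i<n-1. dist (fst (p i)) (snd (p (Suc i)))) - \<gamma> * (\<Sum>i<n. dist (fst (p i)) (snd (p i))) + dist (fst (p (n-1))) r)"
  define Ch where "Ch = (\<lambda>z. {ch z n p | n p. \<forall>i<n. p i \<in> B})"
  define f where "f = (\<lambda>z. Inf (Ch z))"
  have ne: "Ch z \<noteq> {}" for z unfolding Ch_def by blast
  have low: "x \<ge> - dist r z" if xin: "x \<in> Ch z" for x z
  proof -
    obtain n p where x: "x = ch z n p" and pB: "\<forall>i<n. p i \<in> B" using xin unfolding Ch_def by blast
    show ?thesis
    proof (cases n)
      case 0 then show ?thesis using x by (simp add: ch_def dist_commute)
    next
      case (Suc m)
      have c: "0 \<le> (\<Sum>i<Suc m. dist (fst (p i)) (snd (p (Suc i mod Suc m))) - \<gamma> * dist (fst (p i)) (snd (p i)))"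
        using pB Suc by (intro cyc[rule_format]) simp
      have e: "(\<Sum>i<Suc m. dist (fst (p i)) (snd (p (Suc i mod Suc m))) - \<gamma> * dist (fst (p i)) (snd (p i)))
         = (\<Sum>i<m. dist (fst (p i)) (snd (p (Suc i)))) + dist (fst (p m)) (snd (p 0)) - \<gamma> * (\<Sum>i<Suc m. dist (fst (p i)) (snd (p i)))"
        by (simp add: sum_subtractf sum_distrib_left[symmetric] algebra_simps)
      have t: "dist (fst (p m)) (snd (p 0)) \<le> dist (fst (p m)) r + dist r z + dist z (snd (p 0))"
        by (metis dist_triangle add.assoc order_trans add_left_mono)
      show ?thesis using c e t x Suc by (simp add: ch_def)
    qed
  qed
  have bdd: "bdd_below (Ch z)" for z using low by (meson bdd_below.I)
  have lipch: "ch z n p \<le> dist z z' + ch z' n p" for z z' n p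
    using dist_triangle[of z r z'] dist_triangle[of z "snd (p 0)" z'] by (simp add: ch_def)
  have lip1: "f z \<le> dist z z' + f z'" for z z'
  proof -
    have "f z - dist z z' \<le> Inf (Ch z')"
    proof (rule cInf_greatest[OF ne])
      fix x assume "x \<in> Ch z'"
      then obtain n p where x: "x = ch z' n p" and pB: "\<forall>i<n. p i \<in> B" unfolding Ch_def by blast
      have "f z \<le> ch z n p" unfolding f_def using pB by (intro cInf_lower[OF _ bdd]) (auto simp: Ch_def)
      then show "f z - dist z z' \<le> x" using lipch[of z n p z'] x by simp
    qed
    then show ?thesis by (simp add: f_def)
  qed
  have lip: "\<bar>f a - f b\<bar> \<le> dist a b" for a b
    using lip1[of a b] lip1[of b a] by (simp add: dist_commute abs_le_iff)
  have Bc: "f (fst q) - f (snd q) \<ge> \<gamma> * dist (fst q) (snd q)" if qB: "q \<in> B" for q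
  proof -
    obtain x y where q: "q = (x, y)" by fastforce
    have "f y + \<gamma> * dist x y \<le> Inf (Ch x)"
    proof (rule cInf_greatest[OF ne])
      fix w assume "w \<in> Ch x"
      then obtain n p where w: "w = ch x n p" and pB: "\<forall>i<n. p i \<in> B" unfolding Ch_def by blast
      define p' where "p' = (\<lambda>i. if i = 0 then (x, y) else p (i - 1))"
      have p'0: "p' 0 = (x, y)" and p'S: "p' (Suc i) = p i" for i by (simp_all add: p'_def)
      have p'B: "\<forall>i<Suc n. p' i \<in> B" using pB qB q by (auto simp: p'_def)
      have eq: "ch y (Suc n) p' = ch x n p - \<gamma> * dist x y"
      proof (cases n)
        case 0 then show ?thesis by (simp add: ch_def p'_def)
      next
        case (Suc m)
        have s1: "(\<Sum>i<Suc m. dist (fst (p' i)) (snd (p i))) = dist x (snd (p 0)) + (\<Sum>i<m. dist (fst (p i)) (snd (p (Suc i))))"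
          by (subst sum.lessThan_Suc_shift) (simp add: p'_def)
        have s2: "(\<Sum>i<Suc (Suc m). dist (fst (p' i)) (snd (p' i))) = dist x y + (\<Sum>i<Suc m. dist (fst (p i)) (snd (p i)))"
          by (subst sum.lessThan_Suc_shift) (simp add: p'_def)
        show ?thesis using Suc by (simp add: ch_def p'0 p'S s1 s2 algebra_simps del: sum.lessThan_Suc)
      qed
      have "f y \<le> ch y (Suc n) p'" unfolding f_def using p'B by (intro cInf_lower[OF _ bdd]) (auto simp: Ch_def)
      then show "f y + \<gamma> * dist x y \<le> w" using eq w by simp
    qed
    then show ?thesis using q by (simp add: f_def)
  qed
  show ?thesis using lip Bc by blast
qed



lemma sum_rot: "(\<Sum>i<n. h (Suc i mod n)) = (\<Sum>i<n. (h i :: real))"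
proof (cases n)
  case 0 then show ?thesis by simp
next
  case (Suc m)
  have "(\<Sum>i<Suc m. h (Suc i mod Suc m)) = (\<Sum>i<m. h (Suc i)) + h 0"
    by (simp add: lessThan_Suc)
  also have "\<dots> = (\<Sum>i<Suc m. h i)" by (subst sum.lessThan_Suc_shift) simp
  finally show ?thesis using Suc by simp
qed

lemma easy_gcm:
  fixes B :: "('a::metric_space \<times> 'a) set"
  assumes "B \<subseteq> tildeM" and lip: "\<forall>a b. \<bar>f a - f b\<bar> \<le> dist a b"
    and fB: "\<forall>q\<in>B. f (fst q) - f (snd q) \<ge> \<gamma> * dist (fst q) (snd q)"
  shows "gamma_cyc_mono \<gamma> B"
  unfolding gamma_cyc_mono_def
proof (intro conjI allI impI)
  show "B \<subseteq> tildeM" by fact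
  fix n and p :: "nat \<Rightarrow> 'a \<times> 'a"
  assume pB: "\<forall>i<n. p i \<in> B"
  have "(\<Sum>i<n. f (snd (p i)) - f (snd (p (Suc i mod n)))) \<le>
     (\<Sum>i<n. min (dist (fst (p i)) (snd (p (Suc i mod n))) - \<gamma> * dist (fst (p i)) (snd (p i)))
                          (dist (snd (p i)) (snd (p (Suc i mod n)))))"
  proof (rule sum_mono)
    fix i assume "i \<in> {..<n}"
    then have "p i \<in> B" using pB by auto
    then have a: "f (fst (p i)) - f (snd (p i)) \<ge> \<gamma> * dist (fst (p i)) (snd (p i))" using fB by auto
    have b: "f (fst (p i)) - f (snd (p (Suc i mod n))) \<le> dist (fst (p i)) (snd (p (Suc i mod n)))"
      using lip by (metis abs_le_D1)
    have c: "f (snd (p i)) - f (snd (p (Suc i mod n))) \<le> dist (snd (p i)) (snd (p (Suc i mod n)))"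
      using lip by (metis abs_le_D1)
    show "f (snd (p i)) - f (snd (p (Suc i mod n))) \<le> min (dist (fst (p i)) (snd (p (Suc i mod n))) - \<gamma> * dist (fst (p i)) (snd (p i)))
                          (dist (snd (p i)) (snd (p (Suc i mod n))))"
      using a b c by linarith
  qed
  moreover have "(\<Sum>i<n. f (snd (p i)) - f (snd (p (Suc i mod n)))) = 0"
    using sum_rot[of "\<lambda>i. f (snd (p i))" n] by (simp add: sum_subtractf)
  ultimately show "0 \<le> (\<Sum>i<n. min (dist (fst (p i)) (snd (p (Suc i mod n))) - \<gamma> * dist (fst (p i)) (snd (p i)))
                          (dist (snd (p i)) (snd (p (Suc i mod n)))))" by simp
qed

lemma gcm_plain:
  assumes "gamma_cyc_mono \<gamma> B"
  shows "\<forall>n p. (\<forall>i<n. p i \<in> B) \<longrightarrow> 0 \<le> (\<Sum>i<n. dist (fst (p i)) (snd (p (Suc i mod n))) - \<gamma> * dist (fst (p i)) (snd (p i)))"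
proof (intro allI impI)
  fix n and p :: "nat \<Rightarrow> 'a \<times> 'a" assume pB: "\<forall>i<n. p i \<in> B"
  have "0 \<le> (\<Sum>i<n. min (dist (fst (p i)) (snd (p (Suc i mod n))) - \<gamma> * dist (fst (p i)) (snd (p i)))
                          (dist (snd (p i)) (snd (p (Suc i mod n)))))"
    using assms pB unfolding gamma_cyc_mono_def by blast
  also have "\<dots> \<le> (\<Sum>i<n. dist (fst (p i)) (snd (p (Suc i mod n))) - \<gamma> * dist (fst (p i)) (snd (p i)))"
    by (rule sum_mono) simp
  finally show "0 \<le> (\<Sum>i<n. dist (fst (p i)) (snd (p (Suc i mod n))) - \<gamma> * dist (fst (p i)) (snd (p i)))" .
qed

lemma cm_plain:
  assumes "cyc_mono B"
  shows "\<forall>n p. (\<forall>i<n. p i \<in> B) \<longrightarrow> 0 \<le> (\<Sum>i<n. dist (fst (p i)) (snd (p (Suc i mod n))) - 1 * dist (fst (p i)) (snd (p i)))"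
  using assms unfolding cyc_mono_def by (simp add: sum_subtractf)

lemma lipnorm_le:
  fixes h :: "'a::metric_space \<Rightarrow> real"
  assumes "\<exists>u v::'a. u \<noteq> v" "\<forall>a b. \<bar>h a - h b\<bar> \<le> C * dist a b"
  shows "lipnorm h \<le> C"
  unfolding lipnorm_def
proof (rule cSup_least)
  show "{\<bar>h x - h y\<bar> / dist x y |x y. x \<noteq> y} \<noteq> {}" using assms(1) by blast
  fix z assume "z \<in> {\<bar>h x - h y\<bar> / dist x y |x y. x \<noteq> y}"
  then obtain x y where z: "z = \<bar>h x - h y\<bar> / dist x y" "x \<noteq> y" by blast
  then show "z \<le> C" using assms(2) by (simp add: divide_le_eq)
qed

lemma lipnorm_ge:
  fixes h :: "'a::metric_space \<Rightarrow> real"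
  assumes "\<forall>a b. \<bar>h a - h b\<bar> \<le> C * dist a b" "x \<noteq> y"
  shows "\<bar>h x - h y\<bar> / dist x y \<le> lipnorm h"
  unfolding lipnorm_def
proof (rule cSup_upper)
  show "\<bar>h x - h y\<bar> / dist x y \<in> {\<bar>h x - h y\<bar> / dist x y |x y. x \<noteq> y}" using assms(2) by blast
  show "bdd_above {\<bar>h x - h y\<bar> / dist x y |x y. x \<noteq> y}"
  proof (rule bdd_aboveI)
    fix z assume "z \<in> {\<bar>h x - h y\<bar> / dist x y |x y. x \<noteq> y}"
    then obtain x y where z: "z = \<bar>h x - h y\<bar> / dist x y" "x \<noteq> y" by blast
    then show "z \<le> C" using assms(1) by (simp add: divide_le_eq)
  qed
qed

lemma LipBall_char:
  fixes x0 :: "'a::metric_space"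
  assumes ex: "\<exists>u v::'a. u \<noteq> v"
  shows "f \<in> LipBall x0 \<longleftrightarrow> f x0 = 0 \<and> (\<forall>a b. \<bar>f a - f b\<bar> \<le> dist a b)"
proof
  assume f: "f \<in> LipBall x0"
  then obtain C where C: "C-lipschitz_on UNIV f" and f0: "f x0 = 0" and ln: "lipnorm f \<le> 1"
    unfolding LipBall_def Lip0_def by auto
  have L: "\<forall>a b. \<bar>f a - f b\<bar> \<le> C * dist a b" using C unfolding lipschitz_on_def dist_real_def by auto
  have "\<bar>f a - f b\<bar> \<le> dist a b" for a b
  proof (cases "a = b")
    case False
    then have "\<bar>f a - f b\<bar> / dist a b \<le> 1" using lipnorm_ge[OF L False] ln by linarith
    then show ?thesis using False by (simp add: divide_le_eq)
  qed simp
  then show "f x0 = 0 \<and> (\<forall>a b. \<bar>f a - f b\<bar> \<le> dist a b)" using f0 by blast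
next
  assume f: "f x0 = 0 \<and> (\<forall>a b. \<bar>f a - f b\<bar> \<le> dist a b)"
  have "1-lipschitz_on UNIV f" using f unfolding lipschitz_on_def dist_real_def by auto
  moreover have "lipnorm f \<le> 1" using f by (intro lipnorm_le[OF ex]) simp
  ultimately show "f \<in> LipBall x0" using f unfolding LipBall_def Lip0_def by blast
qed



lemma sum_perturb:
  fixes g c :: "'b \<Rightarrow> real"
  assumes "finite Q" "\<forall>i<n. p i \<in> Q" "\<forall>i<n. P i \<longrightarrow> w i \<in> Q"
  shows "(\<Sum>q\<in>Q. (c q + t * (\<Sum>i<n. (if q = w i \<and> P i then 1 else 0) - (if q = p i then 1 else 0))) * g q)
       = (\<Sum>q\<in>Q. c q * g q) + t * (\<Sum>i<n. (if P i then g (w i) else 0) - g (p i))"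
proof -
  have "(\<Sum>q\<in>Q. (c q + t * (\<Sum>i<n. (if q = w i \<and> P i then 1 else 0) - (if q = p i then 1 else 0))) * g q)
     = (\<Sum>q\<in>Q. c q * g q) + t * (\<Sum>q\<in>Q. \<Sum>i<n. ((if q = w i \<and> P i then 1 else 0) - (if q = p i then 1 else 0)) * g q)"
    by (simp add: algebra_simps sum.distrib sum_distrib_left sum_distrib_right)
  also have "(\<Sum>q\<in>Q. \<Sum>i<n. ((if q = w i \<and> P i then 1 else 0) - (if q = p i then 1 else 0)) * g q)
      = (\<Sum>i<n. \<Sum>q\<in>Q. ((if q = w i \<and> P i then 1 else 0) - (if q = p i then 1 else 0)) * g q)"
    by (rule sum.swap)
  also have "\<dots> = (\<Sum>i<n. (if P i then g (w i) else 0) - g (p i))"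
  proof (rule sum.cong[OF refl])
    fix i assume i: "i \<in> {..<n}"
    have "(\<Sum>q\<in>Q. ((if q = w i \<and> P i then 1 else 0) - (if q = p i then 1 else 0)) * g q)
       = (\<Sum>q\<in>Q. (if P i then (if q = w i then g q else 0) else 0)) - (\<Sum>q\<in>Q. (if q = p i then g q else 0))"
      by (simp add: sum_subtractf[symmetric] left_diff_distrib if_distrib cong: if_cong) (auto intro: sum.cong)
    also have "\<dots> = (if P i then g (w i) else 0) - g (p i)"
      using assms i by (auto simp: sum.delta')
    finally show "(\<Sum>q\<in>Q. ((if q = w i \<and> P i then 1 else 0) - (if q = p i then 1 else 0)) * g q) = (if P i then g (w i) else 0) - g (p i)" .
  qed
  finally show ?thesis .
qed



lemma repr_exists:
  fixes x0 :: "'a::metric_space" and S :: "'a set" and a :: "'a \<Rightarrow> real"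
  assumes finS: "finite S"
  shows "\<exists>A c. finite A \<and> A \<subseteq> tildeM \<and> cyc_mono A \<and> (\<forall>q\<in>A. c q \<ge> 0) \<and>
     (\<forall>f. f x0 = 0 \<longrightarrow> molecule S a f = (\<Sum>q\<in>A. c q * (f (fst q) - f (snd q))))"
proof -
  define T where "T = insert x0 S"
  define Q where "Q = {q \<in> T \<times> T. fst q \<noteq> snd q}"
  have finQ: "finite Q" unfolding Q_def T_def using finS by auto
  define dd where "dd = (\<lambda>q::'a\<times>'a. dist (fst q) (snd q))"
  have ddpos: "dd q > 0" if "q \<in> Q" for q using that by (auto simp: Q_def dd_def)
  define repr where "repr = (\<lambda>c::'a\<times>'a\<Rightarrow>real. \<forall>f. f x0 = 0 \<longrightarrow> molecule S a f = (\<Sum>q\<in>Q. c q * (f (fst q) - f (snd q))))"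
  define cost where "cost = (\<lambda>c::'a\<times>'a\<Rightarrow>real. \<Sum>q\<in>Q. c q * dd q)"
  have cost_ge: "c q * dd q \<le> cost c" if "\<forall>q\<in>Q. c q \<ge> 0" "q \<in> Q" for c q
    unfolding cost_def using that finQ ddpos
    by (intro member_le_sum) (auto simp: dd_def)
  define c0 where "c0 = (\<lambda>q. (if snd q = x0 \<and> fst q \<in> S - {x0} then max (a (fst q)) 0 else 0)
       + (if fst q = x0 \<and> snd q \<in> S - {x0} then max (- a (snd q)) 0 else 0))"
  have c0nn: "c0 q \<ge> 0" for q by (simp add: c0_def)
  have c0Q: "c0 q = 0" if "q \<notin> Q" for q using that by (cases q) (auto simp: c0_def Q_def T_def)
  have repr0: "repr c0" unfolding repr_def
  proof (intro allI impI)
    fix f :: "'a \<Rightarrow> real" assume f0: "f x0 = 0"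
    define g where "g = (\<lambda>q. f (fst q) - f (snd q))"
    define S' where "S' = S - {x0}"
    have e1: "{q\<in>Q. snd q = x0 \<and> fst q \<in> S'} = (\<lambda>x. (x,x0)) ` S'" by (auto simp: Q_def T_def S'_def)
    have e2: "{q\<in>Q. fst q = x0 \<and> snd q \<in> S'} = (\<lambda>y. (x0,y)) ` S'" by (auto simp: Q_def T_def S'_def)
    have "(\<Sum>q\<in>Q. c0 q * g q) = (\<Sum>q\<in>Q. (if snd q = x0 \<and> fst q \<in> S' then max (a (fst q)) 0 * g q else 0)
        + (if fst q = x0 \<and> snd q \<in> S' then max (- a (snd q)) 0 * g q else 0))"
      by (rule sum.cong) (auto simp: c0_def S'_def algebra_simps)
    also have "\<dots> = (\<Sum>q\<in>Q. (if snd q = x0 \<and> fst q \<in> S' then max (a (fst q)) 0 * g q else 0))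
        + (\<Sum>q\<in>Q. (if fst q = x0 \<and> snd q \<in> S' then max (- a (snd q)) 0 * g q else 0))"
      by (rule sum.distrib)
    also have "(\<Sum>q\<in>Q. (if snd q = x0 \<and> fst q \<in> S' then max (a (fst q)) 0 * g q else 0))
        = (\<Sum>q\<in>{q\<in>Q. snd q = x0 \<and> fst q \<in> S'}. max (a (fst q)) 0 * g q)"
      by (simp add: sum.inter_filter[OF finQ])
    also have "\<dots> = (\<Sum>x\<in>S'. max (a x) 0 * f x)"
      unfolding e1 by (subst sum.reindex) (auto simp: inj_on_def g_def f0)
    also have "(\<Sum>q\<in>Q. (if fst q = x0 \<and> snd q \<in> S' then max (- a (snd q)) 0 * g q else 0))
        = (\<Sum>q\<in>{q\<in>Q. fst q = x0 \<and> snd q \<in> S'}. max (- a (snd q)) 0 * g q)"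
      by (simp add: sum.inter_filter[OF finQ])
    also have "\<dots> = (\<Sum>x\<in>S'. - (max (- a x) 0 * f x))"
      unfolding e2 by (subst sum.reindex) (auto simp: inj_on_def g_def f0)
    also have "(\<Sum>x\<in>S'. max (a x) 0 * f x) + (\<Sum>x\<in>S'. - (max (- a x) 0 * f x)) = (\<Sum>x\<in>S'. a x * f x)"
      unfolding sum.distrib[symmetric] by (rule sum.cong) (auto simp: max_def algebra_simps)
    also have "\<dots> = (\<Sum>x\<in>S. a x * f x)"
      unfolding S'_def using finS f0 by (intro sum.mono_neutral_left) auto
    finally show "molecule S a f = (\<Sum>q\<in>Q. c0 q * (f (fst q) - f (snd q)))"
      by (simp add: molecule_def g_def)
  qed
  define K where "K = cost c0"
  define Kb where "Kb = (\<lambda>q. if q \<in> Q then {0..K / dd q} else {0::real})"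
  define C where "C = (PiE UNIV Kb) \<inter> {c. repr c} \<inter> {c. cost c \<le> K}"
  have contc: "continuous_on UNIV (\<lambda>c::'a\<times>'a\<Rightarrow>real. \<Sum>q\<in>Q. c q * k q)" for k :: "'a\<times>'a\<Rightarrow>real"
    by (intro continuous_intros continuous_on_product_coordinates)
  have comp1: "compact (PiE UNIV Kb)"
  proof -
    have "compactin (product_topology (\<lambda>_. euclidean) UNIV) (PiE UNIV Kb)"
      by (subst compactin_PiE) (auto simp: Kb_def)
    then show ?thesis by (simp add: euclidean_product_topology)
  qed
  have cl1: "closed {c. repr c}"
    unfolding repr_def
  proof (intro closed_Collect_all)
    fix f :: "'a \<Rightarrow> real"
    show "closed {c. f x0 = 0 \<longrightarrow> molecule S a f = (\<Sum>q\<in>Q. c q * (f (fst q) - f (snd q)))}"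
    proof (cases "f x0 = 0")
      case True
      have "closed {c. (\<lambda>_. molecule S a f) c = (\<lambda>c. \<Sum>q\<in>Q. c q * (f (fst q) - f (snd q))) c}"
        by (intro closed_Collect_eq continuous_on_const contc)
      then show ?thesis using True by simp
    qed simp
  qed
  have cl2: "closed {c. cost c \<le> K}" unfolding cost_def
    by (intro closed_Collect_le contc continuous_on_const)
  have compC: "compact C" unfolding C_def using comp1 cl1 cl2 by (intro compact_Int_closed closed_Int) auto
  have c0C: "c0 \<in> C"
  proof -
    have "c0 q \<in> Kb q" for q
    proof (cases "q \<in> Q")
      case True
      have "c0 q * dd q \<le> K" unfolding K_def using cost_ge[of c0 q] c0nn True by auto
      then show ?thesis using True ddpos[OF True] c0nn by (simp add: Kb_def pos_le_divide_eq)
    qed (simp add: Kb_def c0Q)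
    then show ?thesis unfolding C_def K_def using repr0 by auto
  qed
  obtain c where cC: "c \<in> C" and cmin: "\<forall>c'\<in>C. cost c \<le> cost c'"
    using continuous_attains_inf[OF compC _ continuous_on_subset[OF contc[of dd]]] c0C
    unfolding cost_def by blast
  have cKb: "c q \<in> Kb q" for q using cC unfolding C_def PiE_def Pi_def by blast
  have cnn: "c q \<ge> 0" for q using cKb[of q] by (auto simp: Kb_def split: if_splits)
  have cQ: "c q = 0" if "q \<notin> Q" for q using cKb[of q] that by (auto simp: Kb_def)
  have crepr: "repr c" using cC unfolding C_def by auto
  have ccost: "cost c \<le> K" using cC unfolding C_def by auto
  define A where "A = {q \<in> Q. c q > 0}"
  have AQ: "A \<subseteq> Q" unfolding A_def by auto
  have cm: "cyc_mono A"
    unfolding cyc_mono_def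
  proof (intro conjI allI impI)
    show "A \<subseteq> tildeM" using AQ by (auto simp: Q_def tildeM_def)
    fix n and p :: "nat \<Rightarrow> 'a \<times> 'a"
    assume pA: "\<forall>i<n. p i \<in> A"
    show "(\<Sum>i<n. dist (fst (p i)) (snd (p i))) \<le> (\<Sum>i<n. dist (fst (p i)) (snd (p (Suc i mod n))))"
    proof (rule ccontr)
      assume strict: "\<not> ?thesis"
      then have n0: "n > 0" by (cases n) auto
      define P where "P = p ` {..<n}"
      have finP: "finite P" "P \<noteq> {}" using n0 by (auto simp: P_def)
      have PA: "P \<subseteq> A" using pA by (auto simp: P_def)
      define m where "m = Min (c ` P)"
      have mpos: "m > 0" unfolding m_def using finP PA by (subst Min_gr_iff) (auto simp: A_def)
      have mle: "m \<le> c q" if "q \<in> P" for q unfolding m_def using finP that by auto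
      define t where "t = m / real n"
      have tpos: "t > 0" using mpos n0 by (simp add: t_def)
      have tn: "t * real n = m" using n0 by (simp add: t_def)
      define w where "w = (\<lambda>i. (fst (p i), snd (p (Suc i mod n))))"
      define Pr where "Pr = (\<lambda>i. fst (w i) \<noteq> snd (w i))"
      have pQ: "\<forall>i<n. p i \<in> Q" using pA AQ by auto
      have wQ: "\<forall>i<n. Pr i \<longrightarrow> w i \<in> Q"
      proof (intro allI impI)
        fix i assume i: "i < n" "Pr i"
        have "Suc i mod n < n" using n0 by simp
        then have "p (Suc i mod n) \<in> Q" using pQ by auto
        moreover have "p i \<in> Q" using pQ i by auto
        ultimately show "w i \<in> Q" using i(2) by (auto simp: w_def Pr_def Q_def)
      qed
      define s where "s = (\<lambda>q. \<Sum>i<n. (if q = w i \<and> Pr i then 1 else 0) - (if q = p i then 1 else (0::real)))"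
      define c' where "c' = (\<lambda>q. c q + t * s q)"
      have pert: "(\<Sum>q\<in>Q. c' q * g q) = (\<Sum>q\<in>Q. c q * g q) + t * (\<Sum>i<n. (if Pr i then g (w i) else 0) - g (p i))" for g
        unfolding c'_def s_def by (rule sum_perturb[OF finQ pQ wQ])
      have c'repr: "repr c'" unfolding repr_def
      proof (intro allI impI)
        fix f :: "'a \<Rightarrow> real" assume f0: "f x0 = 0"
        have "(\<Sum>i<n. (if Pr i then (f (fst (w i)) - f (snd (w i))) else 0) - (f (fst (p i)) - f (snd (p i))))
            = (\<Sum>i<n. f (snd (p i)) - f (snd (p (Suc i mod n))))"
          by (rule sum.cong) (auto simp: Pr_def w_def)
        also have "\<dots> = 0" using sum_rot[of "\<lambda>i. f (snd (p i))" n] by (simp add: sum_subtractf)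
        finally show "molecule S a f = (\<Sum>q\<in>Q. c' q * (f (fst q) - f (snd q)))"
        proof -
          have e: "(\<Sum>q\<in>Q. c' q * (f (fst q) - f (snd q))) = (\<Sum>q\<in>Q. c q * (f (fst q) - f (snd q))) + t * (\<Sum>i<n. (if Pr i then f (fst (w i)) - f (snd (w i)) else 0) - (f (fst (p i)) - f (snd (p i))))"
            by (rule pert)
          have m: "molecule S a f = (\<Sum>q\<in>Q. c q * (f (fst q) - f (snd q)))" using crepr f0 unfolding repr_def by blast
          assume "(\<Sum>i<n. (if Pr i then f (fst (w i)) - f (snd (w i)) else 0) - (f (fst (p i)) - f (snd (p i)))) = 0"
          then show ?thesis using e m by simp
        qed
      qed
      have "(\<Sum>i<n. (if Pr i then dd (w i) else 0) - dd (p i))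
            = (\<Sum>i<n. dist (fst (p i)) (snd (p (Suc i mod n)))) - (\<Sum>i<n. dist (fst (p i)) (snd (p i)))"
        unfolding sum_subtractf[symmetric] by (rule sum.cong) (auto simp: Pr_def w_def dd_def)
      also have "\<dots> < 0" using strict by simp
      finally have costlt: "cost c' < cost c"
        using pert[of dd] tpos unfolding cost_def by (simp add: mult_pos_neg)
      have s_lb: "s q \<ge> - (\<Sum>i<n. (if q = p i then 1 else (0::real)))" for q
        unfolding s_def sum_negf[symmetric] by (rule sum_mono) auto
      have cnt: "(\<Sum>i<n. (if q = p i then 1 else (0::real))) \<le> real n" for q
        using sum_bounded_above[of "{..<n}" "\<lambda>i. if q = p i then 1 else (0::real)" 1] by auto
      have c'nn: "c' q \<ge> 0" for q
      proof (cases "q \<in> P")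
        case True
        have "t * s q \<ge> - (t * real n)"
        proof -
          have "s q \<ge> - real n" using s_lb[of q] cnt[of q] by linarith
          then have "t * (- real n) \<le> t * s q" using tpos by (intro mult_left_mono) auto
          then show ?thesis by simp
        qed
        then show ?thesis using mle[OF True] tn by (simp add: c'_def)
      next
        case False
        then have "(\<Sum>i<n. (if q = p i then 1 else (0::real))) = 0" by (intro sum.neutral) (auto simp: P_def)
        then have "s q \<ge> 0" using s_lb[of q] by simp
        then show ?thesis using cnn[of q] tpos by (simp add: c'_def)
      qed
      have c'Q: "c' q = 0" if "q \<notin> Q" for q
      proof -
        have "s q = 0" unfolding s_def using that pQ wQ by (intro sum.neutral) auto
        then show ?thesis using cQ[OF that] by (simp add: c'_def)
      qed
      have "c' \<in> C"
      proof -
        have "c' q \<in> Kb q" for q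
        proof (cases "q \<in> Q")
          case True
          have "c' q * dd q \<le> K" using cost_ge[of c' q] c'nn True costlt ccost by auto
          then show ?thesis using True ddpos[OF True] c'nn by (simp add: Kb_def pos_le_divide_eq)
        qed (simp add: Kb_def c'Q)
        then show ?thesis unfolding C_def using c'repr costlt ccost by (auto simp: PiE_def Pi_def)
      qed
      then have "cost c \<le> cost c'" using cmin by blast
      then show False using costlt by simp
    qed
  qed
  have "finite A" using AQ finQ finite_subset by blast
  moreover have "A \<subseteq> tildeM" using AQ by (auto simp: Q_def tildeM_def)
  moreover have "\<forall>f. f x0 = 0 \<longrightarrow> molecule S a f = (\<Sum>q\<in>A. c q * (f (fst q) - f (snd q)))"
  proof (intro allI impI)
    fix f :: "'a \<Rightarrow> real" assume "f x0 = 0"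
    then have "molecule S a f = (\<Sum>q\<in>Q. c q * (f (fst q) - f (snd q)))" using crepr unfolding repr_def by blast
    also have "\<dots> = (\<Sum>q\<in>A. c q * (f (fst q) - f (snd q)))"
    proof (rule sum.mono_neutral_right[OF finQ AQ])
      show "\<forall>i\<in>Q - A. c i * (f (fst i) - f (snd i)) = 0"
        using cnn by (auto simp: A_def) (metis antisym_conv2 cnn)
    qed
    finally show "molecule S a f = (\<Sum>q\<in>A. c q * (f (fst q) - f (snd q)))" .
  qed
  ultimately show ?thesis using cm cnn by blast
qed

lemma dist_lip1: "\<bar>dist a v - dist b v\<bar> \<le> dist (a::'a::metric_space) b"
proof -
  have "dist a v \<le> dist a b + dist b v" by (rule dist_triangle)
  moreover have "dist b v \<le> dist b a + dist a v" by (rule dist_triangle)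
  ultimately show ?thesis by (simp add: abs_le_iff dist_commute)
qed

lemma normalize_ball:
  fixes x0 :: "'a::metric_space"
  assumes ex: "\<exists>u v::'a. u \<noteq> v" and lip: "\<forall>a b. \<bar>f a - f b\<bar> \<le> dist a b"
  shows "(\<lambda>z. f z - f x0) \<in> LipBall x0"
  using lip by (subst LipBall_char[OF ex]) simp

lemma mol_exact:
  fixes A :: "('a \<times> 'a) set"
  assumes "finite A"
  shows "\<exists>S a. finite S \<and> (\<forall>f. molecule S a f = (\<Sum>q\<in>A. w q * (f (fst q) - f (snd q))))"
proof -
  define S where "S = fst ` A \<union> snd ` A"
  define a where "a = (\<lambda>z. \<Sum>q\<in>A. w q * ((if fst q = z then 1 else 0) - (if snd q = z then 1 else 0)))"
  have finS: "finite S" using assms by (simp add: S_def)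
  have mf: "molecule S a f = (\<Sum>q\<in>A. w q * (f (fst q) - f (snd q)))" for f
  proof -
    have "molecule S a f = (\<Sum>z\<in>S. \<Sum>q\<in>A. w q * ((if fst q = z then f z else 0) - (if snd q = z then f z else 0)))"
      unfolding molecule_def a_def sum_distrib_right
      by (intro sum.cong refl) (simp add: algebra_simps)
    also have "\<dots> = (\<Sum>q\<in>A. \<Sum>z\<in>S. w q * ((if fst q = z then f z else 0) - (if snd q = z then f z else 0)))"
      by (rule sum.swap)
    also have "\<dots> = (\<Sum>q\<in>A. w q * (f (fst q) - f (snd q)))"
    proof (intro sum.cong refl)
      fix q assume q: "q \<in> A"
      have "(\<Sum>z\<in>S. w q * ((if fst q = z then f z else 0) - (if snd q = z then f z else 0)))
          = w q * ((\<Sum>z\<in>S. if fst q = z then f z else 0) - (\<Sum>z\<in>S. if snd q = z then f z else 0))"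
        by (simp add: sum_distrib_left sum_subtractf right_diff_distrib)
      also have "\<dots> = w q * (f (fst q) - f (snd q))" using q finS by (simp add: S_def)
      finally show "(\<Sum>z\<in>S. w q * ((if fst q = z then f z else 0) - (if snd q = z then f z else 0))) = w q * (f (fst q) - f (snd q))" .
    qed
    finally show ?thesis .
  qed
  show ?thesis
    by (rule exI[where x=S], rule exI[where x=a]) (simp add: finS mf)
qed

lemma avg_bound:
  fixes t :: "'b \<Rightarrow> real"
  assumes "finite A" "q0 \<in> A" "\<forall>q\<in>A. t q \<le> 1" "(\<Sum>q\<in>A. t q) > real (card A) * (1 - \<alpha>)"
  shows "t q0 > 1 - real (card A) * \<alpha>"
proof -
  have e1: "(\<Sum>q\<in>A. t q) = t q0 + (\<Sum>q\<in>A - {q0}. t q)" using assms(1,2) by (rule sum.remove)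
  have e2: "(\<Sum>q\<in>A - {q0}. t q) \<le> real (card (A - {q0})) * 1"
    by (rule sum_bounded_above) (use assms(3) in blast)
  have c0: "card A > 0" using assms(1,2) card_gt_0_iff by blast
  have e3: "real (card (A - {q0})) = real (card A) - 1"
    using assms(1,2) c0 by (simp add: card_Diff_singleton of_nat_diff)
  have e4: "real (card A) * (1 - \<alpha>) = real (card A) - real (card A) * \<alpha>" by (simp add: algebra_simps)
  show ?thesis using e1 e2 e3 e4 assms(4) by linarith
qed

lemma ext_gcm:
  fixes A :: "('a::metric_space \<times> 'a) set"
  assumes "A \<subseteq> tildeM" "u \<noteq> v" and lip: "\<forall>a b. \<bar>f a - f b\<bar> \<le> dist a b"
    and fA: "\<forall>q\<in>A. f (fst q) - f (snd q) \<ge> \<gamma> * dist (fst q) (snd q)"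
    and fuv: "f u - f v \<ge> \<gamma> * dist u v"
  shows "gamma_cyc_mono \<gamma> (A \<union> {(u, v)})"
  using assms by (intro easy_gcm[where f = f]) (auto simp: tildeM_def)

lemma dir_forward:
  fixes x0 :: "'a::metric_space" and A :: "('a \<times> 'a) set"
  assumes ex: "\<exists>u v :: 'a. u \<noteq> v" and LD: "wstar_LD2P x0"
    and finA: "finite A" and AT: "A \<subseteq> tildeM" and cmA: "cyc_mono A" and g0: "0 < \<gamma>" and g1: "\<gamma> < 1"
  shows "\<exists>u v. u \<noteq> v \<and> gamma_cyc_mono \<gamma> (A \<union> {(u, v)}) \<and> gamma_cyc_mono \<gamma> (A \<union> {(v, u)})"
proof (cases "A = {}")
  case True
  obtain u v :: 'a where uv: "u \<noteq> v" using ex by blast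
  have l1: "\<forall>a b. \<bar>dist a v - dist b v\<bar> \<le> dist a b" by (simp add: dist_lip1)
  have l2: "\<forall>a b. \<bar>dist a u - dist b u\<bar> \<le> dist a b" by (simp add: dist_lip1)
  have "gamma_cyc_mono \<gamma> (A \<union> {(u, v)})"
    using True uv g1 dist_pos_lt[OF uv] by (intro ext_gcm[OF _ uv l1]) auto
  moreover have "gamma_cyc_mono \<gamma> (A \<union> {(v, u)})"
    using True uv g1 dist_pos_lt[OF uv] by (intro ext_gcm[OF _ _ l2]) (auto simp: dist_commute)
  ultimately show ?thesis using uv by blast
next
  case False
  define N where "N = card A"
  have Npos: "N > 0" using False finA by (simp add: N_def card_gt_0_iff)
  define dd where "dd = (\<lambda>q::'a\<times>'a. dist (fst q) (snd q))"
  have ddpos: "dd q > 0" if "q \<in> A" for q using that AT by (auto simp: tildeM_def dd_def)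
  obtain f0 where f0lip: "\<forall>a b. \<bar>f0 a - f0 b\<bar> \<le> dist a b"
    and f0A: "\<forall>q\<in>A. f0 (fst q) - f0 (snd q) \<ge> 1 * dist (fst q) (snd q)"
    using potential[OF cm_plain[OF cmA]] by blast
  define F0 where "F0 = (\<lambda>z. f0 z - f0 x0)"
  have F0B: "F0 \<in> LipBall x0" unfolding F0_def by (rule normalize_ball[OF ex f0lip])
  define mu where "mu = (\<lambda>f::'a\<Rightarrow>real. \<Sum>q\<in>A. (1 / (real N * dd q)) * (f (fst q) - f (snd q)))"
  have mu_alt: "mu f = (\<Sum>q\<in>A. (f (fst q) - f (snd q)) / dd q) / real N" for f
    unfolding mu_def sum_divide_distrib by (intro sum.cong refl) (simp add: divide_divide_eq_left ac_simps)
  have free: "in_free_space x0 mu"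
  proof -
    obtain S a where Sf: "finite S" and Sa: "\<forall>f. molecule S a f = (\<Sum>q\<in>A. (1 / (real N * dd q)) * (f (fst q) - f (snd q)))"
      using mol_exact[OF finA, of "\<lambda>q. 1 / (real N * dd q)"] by blast
    show ?thesis unfolding in_free_space_def
    proof (intro allI impI)
      fix \<epsilon> :: real assume ep: "\<epsilon> > 0"
      show "\<exists>S a. finite S \<and> (\<forall>f\<in>LipBall x0. \<bar>mu f - molecule S a f\<bar> \<le> \<epsilon>)"
        by (rule exI[where x=S], rule exI[where x=a]) (simp add: mu_def Sf Sa ep less_imp_le)
    qed
  qed
  have term_le: "(f (fst q) - f (snd q)) / dd q \<le> 1" "- 1 \<le> (f (fst q) - f (snd q)) / dd q"
    if "f \<in> LipBall x0" "q \<in> A" for f q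
  proof -
    have "\<bar>f (fst q) - f (snd q)\<bar> \<le> dd q" using that(1) LipBall_char[OF ex] by (auto simp: dd_def)
    then show "(f (fst q) - f (snd q)) / dd q \<le> 1" "- 1 \<le> (f (fst q) - f (snd q)) / dd q"
      using ddpos[OF that(2)] by (auto simp: divide_le_eq le_divide_eq abs_le_iff)
  qed
  have mu_le: "\<bar>mu f\<bar> \<le> 1" if "f \<in> LipBall x0" for f
  proof -
    have "(\<Sum>q\<in>A. (f (fst q) - f (snd q)) / dd q) \<le> real N * 1"
      unfolding N_def using term_le(1)[OF that] by (intro sum_bounded_above) auto
    moreover have "- (real N * 1) \<le> (\<Sum>q\<in>A. (f (fst q) - f (snd q)) / dd q)"
      unfolding N_def using term_le(2)[OF that] sum_bounded_below[of A "-1" "\<lambda>q. (f (fst q) - f (snd q)) / dd q"] by auto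
    ultimately show ?thesis using Npos by (simp add: mu_alt abs_le_iff divide_le_eq le_divide_eq)
  qed
  have F0terms: "(F0 (fst q) - F0 (snd q)) / dd q = 1" if "q \<in> A" for q
  proof -
    have h1: "f0 (fst q) - f0 (snd q) \<ge> dd q" using f0A that unfolding dd_def by auto
    have h2: "\<bar>f0 (fst q) - f0 (snd q)\<bar> \<le> dd q" using f0lip unfolding dd_def by blast
    have "F0 (fst q) - F0 (snd q) = dd q" using h1 h2 unfolding F0_def by (simp add: abs_le_iff)
    then show ?thesis using ddpos[OF that] by simp
  qed
  have muF0: "mu F0 = 1"
  proof -
    have "(\<Sum>q\<in>A. (F0 (fst q) - F0 (snd q)) / dd q) = (\<Sum>q\<in>A. 1)"
      by (rule sum.cong) (simp_all add: F0terms)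
    then show ?thesis using Npos by (simp add: mu_alt N_def)
  qed
  have dn: "dual_norm x0 mu = 1"
    unfolding dual_norm_def
    by (rule cSup_eq_maximum) (use F0B muF0 mu_le in force)+
  define \<alpha> where "\<alpha> = (1 - \<gamma>) / real N"
  have apos: "\<alpha> > 0" using g1 Npos by (simp add: \<alpha>_def)
  have diam: "lip_diam (wstar_slice x0 mu \<alpha>) = 2" using LD free dn apos unfolding wstar_LD2P_def by blast
  have F0sl: "F0 \<in> wstar_slice x0 mu \<alpha>" using F0B muF0 apos by (simp add: wstar_slice_def)
  have "\<exists>d\<in>{lipnorm (f - g) |f g. f \<in> wstar_slice x0 mu \<alpha> \<and> g \<in> wstar_slice x0 mu \<alpha>}. 1 + \<gamma> < d"
    using diam g1 F0sl unfolding lip_diam_def by (intro less_cSupD) auto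
  then obtain f g where fs: "f \<in> wstar_slice x0 mu \<alpha>" and gs: "g \<in> wstar_slice x0 mu \<alpha>"
    and fg: "lipnorm (f - g) > 1 + \<gamma>" by blast
  have fB: "f \<in> LipBall x0" and gB: "g \<in> LipBall x0" using fs gs by (auto simp: wstar_slice_def)
  have flip: "\<forall>a b. \<bar>f a - f b\<bar> \<le> dist a b" and glip: "\<forall>a b. \<bar>g a - g b\<bar> \<le> dist a b"
    using fB gB LipBall_char[OF ex] by auto
  have onA: "\<forall>q\<in>A. h (fst q) - h (snd q) \<ge> \<gamma> * dist (fst q) (snd q)" if hs: "h \<in> wstar_slice x0 mu \<alpha>" for h
  proof
    fix q assume qA: "q \<in> A"
    have hB: "h \<in> LipBall x0" using hs by (simp add: wstar_slice_def)
    have "mu h > 1 - \<alpha>" using hs by (simp add: wstar_slice_def)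
    then have "(\<Sum>q\<in>A. (h (fst q) - h (snd q)) / dd q) > real N * (1 - \<alpha>)"
      using Npos by (simp add: mu_alt pos_less_divide_eq mult.commute)
    then have "(h (fst q) - h (snd q)) / dd q > 1 - real N * \<alpha>"
      unfolding N_def using avg_bound[OF finA qA, of "\<lambda>q. (h (fst q) - h (snd q)) / dd q" \<alpha>] term_le(1)[OF hB] by auto
    moreover have "1 - real N * \<alpha> = \<gamma>" using Npos by (simp add: \<alpha>_def)
    ultimately have "(h (fst q) - h (snd q)) / dd q > \<gamma>" by simp
    then show "h (fst q) - h (snd q) \<ge> \<gamma> * dist (fst q) (snd q)"
      using ddpos[OF qA] by (simp add: pos_less_divide_eq dd_def)
  qed
  have "\<exists>x y. x \<noteq> y \<and> 1 + \<gamma> < \<bar>(f - g) x - (f - g) y\<bar> / dist x y"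
  proof -
    have "\<exists>d\<in>{\<bar>(f - g) x - (f - g) y\<bar> / dist x y |x y. x \<noteq> y}. 1 + \<gamma> < d"
      using fg ex unfolding lipnorm_def by (intro less_cSupD) auto
    then show ?thesis by blast
  qed
  then obtain x y where xy: "x \<noteq> y" and big: "1 + \<gamma> < \<bar>(f x - g x) - (f y - g y)\<bar> / dist x y" by auto
  have dpos: "dist x y > 0" using xy by simp
  have big2: "(1 + \<gamma>) * dist x y < \<bar>(f x - f y) - (g x - g y)\<bar>"
    using big dpos by (simp add: pos_less_divide_eq algebra_simps)
  have b1: "\<bar>f x - f y\<bar> \<le> dist x y" "\<bar>g x - g y\<bar> \<le> dist x y" using flip glip by auto
  have gd: "\<gamma> * dist x y \<le> dist x y" using g1 dpos by simp
  show ?thesis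
  proof (cases "(f x - f y) - (g x - g y) \<ge> 0")
    case True
    have c1: "f x - f y \<ge> \<gamma> * dist x y" "g y - g x \<ge> \<gamma> * dist y x"
      using big2 True b1 by (auto simp: abs_le_iff dist_commute algebra_simps)
    have "gamma_cyc_mono \<gamma> (A \<union> {(x, y)})" by (rule ext_gcm[OF AT xy flip onA[OF fs] c1(1)])
    moreover have "gamma_cyc_mono \<gamma> (A \<union> {(y, x)})" using xy by (intro ext_gcm[OF AT _ glip onA[OF gs] c1(2)]) auto
    ultimately show ?thesis using xy by blast
  next
    case False
    have c1: "f y - f x \<ge> \<gamma> * dist y x" "g x - g y \<ge> \<gamma> * dist x y"
      using big2 False b1 by (auto simp: abs_le_iff dist_commute algebra_simps)
    have "gamma_cyc_mono \<gamma> (A \<union> {(y, x)})" using xy by (intro ext_gcm[OF AT _ flip onA[OF fs] c1(1)]) auto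
    moreover have "gamma_cyc_mono \<gamma> (A \<union> {(x, y)})" by (rule ext_gcm[OF AT xy glip onA[OF gs] c1(2)])
    ultimately show ?thesis using xy by blast
  qed
qed

lemma dir_backward:
  fixes x0 :: "'a::metric_space"
  assumes ex: "\<exists>u v :: 'a. u \<noteq> v"
    and R: "\<forall>(A :: ('a \<times> 'a) set) \<gamma>. finite A \<and> A \<subseteq> tildeM \<and> cyc_mono A \<and> 0 < \<gamma> \<and> \<gamma> < 1 \<longrightarrow>
       (\<exists>u v. u \<noteq> v \<and> gamma_cyc_mono \<gamma> (A \<union> {(u, v)}) \<and> gamma_cyc_mono \<gamma> (A \<union> {(v, u)}))"
  shows "wstar_LD2P x0"
  unfolding wstar_LD2P_def
proof (intro allI impI)
  fix \<mu> :: "('a \<Rightarrow> real) \<Rightarrow> real" and \<alpha> :: real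
  assume H: "in_free_space x0 \<mu> \<and> dual_norm x0 \<mu> = 1 \<and> \<alpha> > 0"
  have apos: "\<alpha> > 0" using H by blast
  define sl where "sl = wstar_slice x0 \<mu> \<alpha>"
  define D where "D = {lipnorm (f - g) |f g. f \<in> sl \<and> g \<in> sl}"
  have up: "d \<le> 2" if dD: "d \<in> D" for d
  proof -
    obtain f g where d: "d = lipnorm (f - g)" and fs: "f \<in> sl" and gs: "g \<in> sl" using dD by (auto simp: D_def)
    have "f \<in> LipBall x0" "g \<in> LipBall x0" using fs gs by (auto simp: sl_def wstar_slice_def)
    then have fl: "\<forall>a b. \<bar>f a - f b\<bar> \<le> dist a b" and gl: "\<forall>a b. \<bar>g a - g b\<bar> \<le> dist a b"
      using LipBall_char[OF ex] by auto
    have "\<forall>a b. \<bar>(f - g) a - (f - g) b\<bar> \<le> 2 * dist a b"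
    proof (intro allI)
      fix a b
      have "\<bar>(f - g) a - (f - g) b\<bar> \<le> \<bar>f a - f b\<bar> + \<bar>g a - g b\<bar>" using abs_triangle_ineq4[of "f a - f b" "g a - g b"] by (simp add: algebra_simps)
      then show "\<bar>(f - g) a - (f - g) b\<bar> \<le> 2 * dist a b" using fl gl by (smt (verit))
    qed
    then show ?thesis using d lipnorm_le[OF ex] by blast
  qed
  have big: "\<exists>d\<in>D. d > 2 - \<epsilon>" if epos: "\<epsilon> > 0" for \<epsilon>
  proof -
    define e where "e = min (min \<alpha> \<epsilon>) 1 / 4"
    have e0: "e > 0" and ea: "e \<le> \<alpha> / 4" and ee: "e \<le> \<epsilon> / 4" and e1: "e \<le> 1 / 4"
      using apos epos by (auto simp: e_def)
    define \<gamma> where "\<gamma> = 1 - e"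
    define \<delta> where "\<delta> = e / 4"
    have g0: "\<gamma> > 0" and g1: "\<gamma> < 1" using e0 e1 by (auto simp: \<gamma>_def)
    have d0: "\<delta> > 0" using e0 by (simp add: \<delta>_def)
    have "\<exists>S a. finite S \<and> (\<forall>f\<in>LipBall x0. \<bar>\<mu> f - molecule S a f\<bar> \<le> \<delta>)"
      using H d0 unfolding in_free_space_def by blast
    then obtain S a where Sf: "finite S" and Sa: "\<forall>f\<in>LipBall x0. \<bar>\<mu> f - molecule S a f\<bar> \<le> \<delta>"
      by (elim exE conjE)
    have zB: "(\<lambda>_. 0) \<in> LipBall x0" using LipBall_char[OF ex] by simp
    have "\<exists>y\<in>(\<lambda>f. \<bar>\<mu> f\<bar>) ` LipBall x0. 1 - \<delta> < y"
      using H d0 zB unfolding dual_norm_def by (intro less_cSupD) auto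
    then obtain f1 where f1B: "f1 \<in> LipBall x0" and f1b: "\<bar>\<mu> f1\<bar> > 1 - \<delta>" by blast
    have "\<exists>A c. finite A \<and> A \<subseteq> tildeM \<and> cyc_mono A \<and> (\<forall>q\<in>A. c q \<ge> 0) \<and>
     (\<forall>f. f x0 = 0 \<longrightarrow> molecule S a f = (\<Sum>q\<in>A. c q * (f (fst q) - f (snd q))))"
      by (rule repr_exists[OF Sf])
    then obtain A c where Af: "finite A" and AT: "A \<subseteq> tildeM" and Acm: "cyc_mono A" and cnn: "\<forall>q\<in>A. c q \<ge> 0"
      and Arep: "\<forall>f. f x0 = 0 \<longrightarrow> molecule S a f = (\<Sum>q\<in>A. c q * (f (fst q) - f (snd q)))"
      by (elim exE conjE)
    define cost where "cost = (\<Sum>q\<in>A. c q * dist (fst q) (snd q))"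
    have molub: "\<bar>molecule S a f\<bar> \<le> cost" if fB: "f \<in> LipBall x0" for f
    proof -
      have fl: "f x0 = 0" "\<forall>a b. \<bar>f a - f b\<bar> \<le> dist a b" using fB LipBall_char[OF ex] by auto
      have "\<bar>molecule S a f\<bar> = \<bar>\<Sum>q\<in>A. c q * (f (fst q) - f (snd q))\<bar>" using Arep fl by simp
      also have "\<dots> \<le> (\<Sum>q\<in>A. \<bar>c q * (f (fst q) - f (snd q))\<bar>)" by (rule sum_abs)
      also have "\<dots> \<le> cost" unfolding cost_def
      proof (rule sum_mono)
        fix q assume "q \<in> A"
        then have "c q \<ge> 0" using cnn by auto
        then show "\<bar>c q * (f (fst q) - f (snd q))\<bar> \<le> c q * dist (fst q) (snd q)"
          using fl(2) by (simp add: abs_mult mult_left_mono)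
      qed
      finally show ?thesis .
    qed
    have costb: "cost > 1 - 2 * \<delta>"
      using molub[OF f1B] Sa f1B f1b by (smt (verit))
    obtain u v where uv: "u \<noteq> v" and gu: "gamma_cyc_mono \<gamma> (A \<union> {(u, v)})" and gv: "gamma_cyc_mono \<gamma> (A \<union> {(v, u)})"
      using R Af AT Acm g0 g1 by blast
    have mk: "\<exists>F. F \<in> sl \<and> F x - F y \<ge> \<gamma> * dist x y" if gxy: "gamma_cyc_mono \<gamma> (A \<union> {(x, y)})" for x y
    proof -
      obtain fp where fpl: "\<forall>a b. \<bar>fp a - fp b\<bar> \<le> dist a b"
        and fpB: "\<forall>q\<in>A \<union> {(x, y)}. fp (fst q) - fp (snd q) \<ge> \<gamma> * dist (fst q) (snd q)"
        using potential[OF gcm_plain[OF gxy]] by blast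
      define F where "F = (\<lambda>z. fp z - fp x0)"
      have FB: "F \<in> LipBall x0" unfolding F_def by (rule normalize_ball[OF ex fpl])
      have FA: "\<forall>q\<in>A. F (fst q) - F (snd q) \<ge> \<gamma> * dist (fst q) (snd q)" using fpB by (simp add: F_def)
      have Fxy: "F x - F y \<ge> \<gamma> * dist x y" using fpB by (simp add: F_def)
      have "molecule S a F = (\<Sum>q\<in>A. c q * (F (fst q) - F (snd q)))" using Arep by (simp add: F_def)
      also have "\<dots> \<ge> (\<Sum>q\<in>A. c q * (\<gamma> * dist (fst q) (snd q)))"
        using FA cnn by (intro sum_mono mult_left_mono) auto
      finally have "molecule S a F \<ge> \<gamma> * cost" unfolding cost_def by (simp add: sum_distrib_left ac_simps)
      moreover have "\<gamma> * cost > \<gamma> * (1 - 2 * \<delta>)" using costb g0 by simp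
      moreover have "\<mu> F \<ge> molecule S a F - \<delta>" using Sa FB by (smt (verit))
      moreover have "\<gamma> * (1 - 2 * \<delta>) = 1 - e - 2 * \<delta> + 2 * e * \<delta>" by (simp add: \<gamma>_def algebra_simps)
      moreover have "e * \<delta> \<ge> 0" using e0 d0 by simp
      moreover have "\<delta> = e / 4" by (simp add: \<delta>_def)
      ultimately have "\<mu> F > 1 - \<alpha>" using ea apos by linarith
      then have "F \<in> sl" using FB by (simp add: sl_def wstar_slice_def)
      then show ?thesis using Fxy by blast
    qed
    obtain F where Fs: "F \<in> sl" and Fuv: "F u - F v \<ge> \<gamma> * dist u v" using mk[OF gu] by blast
    obtain G where Gs: "G \<in> sl" and Gvu: "G v - G u \<ge> \<gamma> * dist v u" using mk[OF gv] by blast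
    have "F \<in> LipBall x0" "G \<in> LipBall x0" using Fs Gs by (auto simp: sl_def wstar_slice_def)
    then have fl: "\<forall>a b. \<bar>F a - F b\<bar> \<le> dist a b" and gl: "\<forall>a b. \<bar>G a - G b\<bar> \<le> dist a b"
      using LipBall_char[OF ex] by auto
    have L2: "\<forall>a b. \<bar>(F - G) a - (F - G) b\<bar> \<le> 2 * dist a b"
    proof (intro allI)
      fix a b
      have "\<bar>(F - G) a - (F - G) b\<bar> \<le> \<bar>F a - F b\<bar> + \<bar>G a - G b\<bar>" using abs_triangle_ineq4[of "F a - F b" "G a - G b"] by (simp add: algebra_simps)
      then show "\<bar>(F - G) a - (F - G) b\<bar> \<le> 2 * dist a b" using fl gl by (smt (verit))
    qed
    have dpos: "dist u v > 0" using uv by simp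
    have "(F - G) u - (F - G) v \<ge> 2 * \<gamma> * dist u v" using Fuv Gvu by (simp add: dist_commute)
    then have "\<bar>(F - G) u - (F - G) v\<bar> / dist u v \<ge> 2 * \<gamma>"
      using dpos g0 by (simp add: le_divide_eq)
    then have "lipnorm (F - G) \<ge> 2 * \<gamma>" using lipnorm_ge[OF L2 uv] by linarith
    moreover have "2 * \<gamma> > 2 - \<epsilon>" using ee epos by (simp add: \<gamma>_def)
    moreover have "lipnorm (F - G) \<in> D" using Fs Gs by (auto simp: D_def)
    ultimately show ?thesis by (intro bexI[where x="lipnorm (F - G)"]) auto
  qed
  have "Sup D = 2"
  proof (rule cSup_eq_non_empty)
    show "D \<noteq> {}" using big[of 1] by auto
    show "\<And>x. x \<in> D \<Longrightarrow> x \<le> 2" by (rule up)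
    fix y assume yb: "\<And>x. x \<in> D \<Longrightarrow> x \<le> y"
    show "2 \<le> y"
    proof (rule ccontr)
      assume "\<not> 2 \<le> y"
      then obtain d where "d \<in> D" "d > 2 - (2 - y)" using big[of "2 - y"] by auto
      then show False using yb by force
    qed
  qed
  then show "lip_diam (wstar_slice x0 \<mu> \<alpha>) = 2" by (simp add: lip_diam_def D_def sl_def)
qed


theorem proposition4p3:
  fixes x0 :: "'a::metric_space"
  assumes "\<exists>u v :: 'a. u \<noteq> v"
  shows "wstar_LD2P x0 \<longleftrightarrow>
    (\<forall>(A :: ('a \<times> 'a) set) \<gamma>. finite A \<and> A \<subseteq> tildeM \<and> cyc_mono A \<and> 0 < \<gamma> \<and> \<gamma> < 1 \<longrightarrow>
       (\<exists>u v. u \<noteq> v \<and> gamma_cyc_mono \<gamma> (A \<union> {(u, v)}) \<and> gamma_cyc_mono \<gamma> (A \<union> {(v, u)})))"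
proof
  assume LD: "wstar_LD2P x0"
  show "\<forall>(A :: ('a \<times> 'a) set) \<gamma>. finite A \<and> A \<subseteq> tildeM \<and> cyc_mono A \<and> 0 < \<gamma> \<and> \<gamma> < 1 \<longrightarrow>
       (\<exists>u v. u \<noteq> v \<and> gamma_cyc_mono \<gamma> (A \<union> {(u, v)}) \<and> gamma_cyc_mono \<gamma> (A \<union> {(v, u)}))"
  proof (intro allI impI)
    fix A :: "('a \<times> 'a) set" and \<gamma> :: real
    assume h: "finite A \<and> A \<subseteq> tildeM \<and> cyc_mono A \<and> 0 < \<gamma> \<and> \<gamma> < 1"
    show "\<exists>u v. u \<noteq> v \<and> gamma_cyc_mono \<gamma> (A \<union> {(u, v)}) \<and> gamma_cyc_mono \<gamma> (A \<union> {(v, u)})"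
      using h by (intro dir_forward[OF assms LD]) auto
  qed
next
  assume R: "\<forall>(A :: ('a \<times> 'a) set) \<gamma>. finite A \<and> A \<subseteq> tildeM \<and> cyc_mono A \<and> 0 < \<gamma> \<and> \<gamma> < 1 \<longrightarrow>
       (\<exists>u v. u \<noteq> v \<and> gamma_cyc_mono \<gamma> (A \<union> {(u, v)}) \<and> gamma_cyc_mono \<gamma> (A \<union> {(v, u)}))"
  show "wstar_LD2P x0" by (rule dir_backward[OF assms R])
qed

end
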